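(* Let $\mathbf{u}_1,\ldots,\mathbf{u}_n\in\mathbb{C}^d$ satisfy $\sum_{i=1}^n\mathbf{u}_i\mathbf{u}_i^*=\frac{n}{d}\cdot\mathbf{I}$. If $n\le 2d-1$, then for any $\varepsilon_1,\ldots,\varepsilon_n\in\{-1,1\}$, $$\Big\|\sum_{i=1}^n\varepsilon_i\mathbf{u}_i\mathbf{u}_i^*\Big\|=\frac{n}{d}.$$
   Context: $\|\cdot\|$ is the spectral norm. *)

theory Defs
  imports "HOL-Analysis.Analysis"
begin

definition outer_conj :: "complex ^ 'd \<Rightarrow> complex ^ 'd ^ 'd" where
  "outer_conj u = (\<chi> i j. u $ i * cnj (u $ j))"

definition spectral_norm :: "complex ^ 'd ^ 'd \<Rightarrow> real" where
  "spectral_norm A = onorm (\<lambda>x. A *v x)"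

end

theory Submission
  imports Defs
begin

definition cinner :: "complex^'d \<Rightarrow> complex^'d \<Rightarrow> complex" where
  "cinner x y = (\<Sum>j\<in>UNIV. x$j * cnj (y$j))"

lemma cinner_add_left: "cinner (x + y) z = cinner x z + cinner y z"
  by (simp add: cinner_def algebra_simps sum.distrib)
lemma cinner_diff_left: "cinner (x - y) z = cinner x z - cinner y z"
  by (simp add: cinner_def algebra_simps sum_subtractf)
lemma cinner_add_right: "cinner z (x + y) = cinner z x + cinner z y"
  by (simp add: cinner_def algebra_simps sum.distrib)
lemma cinner_diff_right: "cinner z (x - y) = cinner z x - cinner z y"
  by (simp add: cinner_def algebra_simps sum_subtractf)
lemma cinner_scale_left: "cinner (a *s x) y = a * cinner x y"
  by (simp add: cinner_def sum_distrib_left mult.assoc)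
lemma cinner_scale_right: "cinner x (a *s y) = cnj a * cinner x y"
  by (simp add: cinner_def sum_distrib_left algebra_simps)
lemma cinner_commute: "cinner y x = cnj (cinner x y)"
  by (simp add: cinner_def mult.commute)
lemma cinner_sum_left: "cinner (sum f F) y = (\<Sum>i\<in>F. cinner (f i) y)"
  by (simp add: cinner_def sum_distrib_right sum.swap[of _ F])
lemma cinner_self: "cinner x x = complex_of_real ((norm x)^2)"
proof -
  have "(norm x)^2 = (\<Sum>j\<in>UNIV. (norm (x$j))^2)"
    by (simp add: norm_vec_def L2_set_def sum_nonneg)
  then show ?thesis by (simp only: cinner_def of_real_sum complex_norm_square)
qed
lemma inner_cinner: "(x::complex^'d) \<bullet> u = Re (cinner x u)"
  by (simp add: inner_vec_def cinner_def inner_complex_def Re_sum)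
lemma inner_cinner_ii: "(x::complex^'d) \<bullet> (\<i> *s u) = Im (cinner x u)"
  by (simp add: inner_vec_def cinner_def inner_complex_def Im_sum)

definition opF :: "(nat \<Rightarrow> complex^'d) \<Rightarrow> nat set \<Rightarrow> complex^'d \<Rightarrow> complex^'d" where
  "opF u F x = (\<Sum>i\<in>F. cinner x (u i) *s u i)"

lemma opF_add: "opF u F (x + y) = opF u F x + opF u F y"
  by (simp add: opF_def cinner_add_left vec_eq_iff algebra_simps sum.distrib)
lemma opF_diff: "opF u F (x - y) = opF u F x - opF u F y"
  by (simp add: opF_def cinner_diff_left vec_eq_iff algebra_simps sum_subtractf)
lemma opF_scale: "opF u F (a *s x) = a *s opF u F x"
  by (simp add: opF_def cinner_scale_left vec_eq_iff algebra_simps sum_distrib_left)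
lemma opF_union: "A \<inter> B = {} \<Longrightarrow> finite A \<Longrightarrow> finite B \<Longrightarrow> opF u (A \<union> B) x = opF u A x + opF u B x"
  by (simp add: opF_def sum.union_disjoint)

lemma cinner_opF_left: "cinner (opF u F x) y = (\<Sum>i\<in>F. cinner x (u i) * cinner (u i) y)"
  by (simp add: opF_def cinner_sum_left cinner_scale_left)
lemma opF_herm: "cinner (opF u F x) y = cinner x (opF u F y)"
proof -
  have "cinner x (opF u F y) = cnj (cinner (opF u F y) x)" by (rule cinner_commute)
  also have "\<dots> = (\<Sum>i\<in>F. cinner x (u i) * cinner (u i) y)"
    unfolding cinner_opF_left by (simp add: cinner_commute[of x] cinner_commute[of "u _" y] mult.commute)
  finally show ?thesis by (simp add: cinner_opF_left)
qed
lemma opF_psd: "Re (cinner (opF u F x) x) \<ge> 0"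
proof -
  have "cinner (opF u F x) x = (\<Sum>i\<in>F. cinner x (u i) * cnj (cinner x (u i)))"
    unfolding cinner_opF_left by (simp add: cinner_commute[of "u _" x])
  also have "\<dots> = (\<Sum>i\<in>F. complex_of_real ((norm (cinner x (u i)))^2))"
    by (simp only: complex_norm_square)
  finally show ?thesis by (simp add: Re_sum sum_nonneg)
qed

lemma matvec_outer: "(\<Sum>i\<in>F. w i *\<^sub>R outer_conj (u i)) *v x = (\<Sum>i\<in>F. (complex_of_real (w i) * cinner x (u i)) *s u i)"
  apply (simp add: vec_eq_iff matrix_vector_mult_def outer_conj_def)
  apply (simp add: cinner_def sum_distrib_left
      sum_distrib_right sum.swap[of _ F] scaleR_conv_of_real algebra_simps)
  done

lemma mat_vec: "mat (c::complex) *v x = c *s x"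
proof -
  have "\<And>i j. (if i = j then c else 0) * x $ j = (if i = j then c * x$j else 0)" by simp
  then show ?thesis by (simp add: vec_eq_iff matrix_vector_mult_def mat_def)
qed

lemma of_real_smult: "complex_of_real r *s (x::complex^'d) = r *\<^sub>R x"
unfolding vec_eq_iff proof
  fix i
  have "(r *\<^sub>R x) $ i = complex_of_real r * x $ i"
    unfolding vector_scaleR_component by (rule scaleR_conv_of_real)
  then show "(complex_of_real r *s x) $ i = (r *\<^sub>R x) $ i" by simp
qed

lemma opF_empty: "opF u {} x = 0"
  by (simp add: opF_def)

lemma cinner_zero_left: "cinner 0 y = 0"
  by (simp add: cinner_def)

lemma kernel_exists:
  fixes u :: "nat \<Rightarrow> complex^'d"
  assumes "finite F" "card F < CARD('d)"
  shows "\<exists>x. x \<noteq> 0 \<and> opF u F x = 0"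
proof -
  define S0 where "S0 = u ` F \<union> (\<lambda>i. \<i> *s u i) ` F"
  have fin: "finite S0" using assms(1) by (simp add: S0_def)
  have "card S0 \<le> card (u ` F) + card ((\<lambda>i. \<i> *s u i) ` F)"
    unfolding S0_def by (rule card_Un_le)
  also have "\<dots> \<le> card F + card F"
    by (intro add_mono card_image_le assms(1))
  finally have cS: "card S0 < DIM(complex^'d)" using assms(2) by simp
  have "dim S0 \<le> card S0"
    by (rule dim_le_card[OF span_superset fin])
  with cS have "dim S0 < DIM(complex^'d)" by simp
  then obtain x :: "complex^'d" where x: "x \<noteq> 0" "\<And>y. y \<in> span S0 \<Longrightarrow> orthogonal x y"
    using orthogonal_to_subspace_exists by blast
  have "cinner x (u i) = 0" if "i \<in> F" for i
  proof -
    have "u i \<in> span S0" "\<i> *s u i \<in> span S0"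
      using that by (auto simp: S0_def intro: span_base)
    then have a: "x \<bullet> u i = 0" and b: "x \<bullet> (\<i> *s u i) = 0"
      using x(2) by (auto simp: orthogonal_def)
    from b have "Im (cinner x (u i)) = 0" by (simp only: inner_cinner_ii)
    moreover from a have "Re (cinner x (u i)) = 0" by (simp only: inner_cinner)
    ultimately show ?thesis by (simp add: complex_eq_iff)
  qed
  then have "opF u F x = 0" by (simp add: opF_def)
  with x show ?thesis by blast
qed

lemma neg_smult: "(- a) *s (v::complex^'d) = - (a *s v)"
  by (simp add: vec_eq_iff)


theorem lemma5p2:
  fixes u :: "nat \<Rightarrow> complex ^ 'd" and n :: nat and \<epsilon> :: "nat \<Rightarrow> real"
  assumes frame: "(\<Sum>i<n. outer_conj (u i)) = mat (complex_of_real (real n / real CARD('d)))"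
    and small: "n \<le> 2 * CARD('d) - 1"
    and signs: "\<And>i. i < n \<Longrightarrow> \<epsilon> i \<in> {-1, 1}"
  shows "spectral_norm (\<Sum>i<n. \<epsilon> i *\<^sub>R outer_conj (u i)) = real n / real CARD('d)"
proof -
  define c where "c = real n / real CARD('d)"
  define C where "C = complex_of_real c"
  define S where "S = (\<Sum>i<n. \<epsilon> i *\<^sub>R outer_conj (u i))"
  define P where "P = {i. i < n \<and> \<epsilon> i = 1}"
  define M where "M = {i. i < n \<and> \<epsilon> i = -1}"
  have c0: "c \<ge> 0" by (simp add: c_def)
  have PM: "P \<union> M = {..<n}" using signs by (auto simp: P_def M_def)
  have PMd: "P \<inter> M = {}" by (auto simp: P_def M_def)
  have finP: "finite P" and finM: "finite M" by (auto simp: P_def M_def)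
  have Sx: "S *v x = opF u P x - opF u M x" for x
  proof -
    have "S *v x = (\<Sum>i\<in>P \<union> M. (complex_of_real (\<epsilon> i) * cinner x (u i)) *s u i)"
      unfolding S_def matvec_outer PM ..
    also have "\<dots> = (\<Sum>i\<in>P. (complex_of_real (\<epsilon> i) * cinner x (u i)) *s u i)
        + (\<Sum>i\<in>M. (complex_of_real (\<epsilon> i) * cinner x (u i)) *s u i)"
      by (rule sum.union_disjoint[OF finP finM PMd])
    also have "(\<Sum>i\<in>P. (complex_of_real (\<epsilon> i) * cinner x (u i)) *s u i) = opF u P x"
      unfolding opF_def by (rule sum.cong) (auto simp: P_def)
    also have "(\<Sum>i\<in>M. (complex_of_real (\<epsilon> i) * cinner x (u i)) *s u i) = - opF u M x"
      unfolding opF_def sum_negf[symmetric] by (rule sum.cong) (auto simp: M_def neg_smult)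
    finally show ?thesis by simp
  qed
  have fr: "opF u P y + opF u M y = C *s y" for y
  proof -
    have "opF u P y + opF u M y = opF u {..<n} y"
      using opF_union[OF PMd finP finM, of u y] unfolding PM by simp
    also have "\<dots> = (\<Sum>i<n. (1::real) *\<^sub>R outer_conj (u i)) *v y"
      unfolding matvec_outer opF_def by simp
    also have "\<dots> = C *s y" using frame by (simp add: C_def c_def mat_vec)
    finally show ?thesis .
  qed
  have upper: "norm (S *v x) \<le> c * norm x" for x
  proof -
    define p where "p = opF u P x"
    define q where "q = opF u M x"
    have pq: "p + q = C *s x" using fr by (simp add: p_def q_def)
    have e1: "complex_of_real ((norm (S *v x))^2) = cinner p p - cinner p q - (cinner q p - cinner q q)"
      unfolding cinner_self[symmetric] Sx p_def[symmetric] q_def[symmetric]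
      by (simp add: cinner_diff_left cinner_diff_right)
    have "complex_of_real ((c * norm x)^2) = cinner (C *s x) (C *s x)"
      unfolding cinner_scale_left cinner_scale_right unfolding cinner_self
      by (simp add: C_def power_mult_distrib power2_eq_square)
    also have "\<dots> = cinner p p + cinner p q + (cinner q p + cinner q q)"
      unfolding pq[symmetric] by (simp add: cinner_add_left cinner_add_right)
    finally have e2: "complex_of_real ((c * norm x)^2) = cinner p p + cinner p q + (cinner q p + cinner q q)" .
    have e3: "Re (cinner q p) = Re (cinner p q)" by (subst cinner_commute) simp
    have pos: "Re (cinner p q) \<ge> 0"
    proof (cases "n = 0")
      case True
      then have "P = {}" by (simp add: P_def)
      then show ?thesis by (simp add: p_def opF_empty cinner_zero_left)
    next
      case False
      then have cpos: "c > 0" by (simp add: c_def)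
      have Mp: "opF u M p = opF u P q"
      proof -
        have "opF u M p = C *s p - opF u P p" using fr[of p] by (simp add: algebra_simps)
        moreover have "opF u P q = C *s p - opF u P p"
        proof -
          have "q = C *s x - p" using pq by (simp add: algebra_simps)
          then have "opF u P q = C *s opF u P x - opF u P p" by (simp only: opF_diff opF_scale)
          then show ?thesis by (simp only: p_def)
        qed
        ultimately show ?thesis by simp
      qed
      have "C * cinner p q = cinner p (C *s q)"
        by (simp add: cinner_scale_right C_def)
      also have "C *s q = opF u M p + opF u M q"
      proof -
        have "C *s q = opF u M (C *s x)" by (simp only: q_def opF_scale)
        then show ?thesis by (simp only: pq[symmetric] opF_add)
      qed
      also have "cinner p (opF u M p + opF u M q) = cinner (opF u M p) p + cinner (opF u P q) q"
        by (simp add: cinner_add_right opF_herm Mp[symmetric])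
      finally have Ceq: "C * cinner p q = cinner (opF u M p) p + cinner (opF u P q) q" .
      then have "c * Re (cinner p q) = Re (cinner (opF u M p) p) + Re (cinner (opF u P q) q)"
      proof -
        have "Re (C * cinner p q) = c * Re (cinner p q)" by (simp add: C_def)
        moreover have "Re (C * cinner p q) = Re (cinner (opF u M p) p) + Re (cinner (opF u P q) q)"
          unfolding Ceq by simp
        ultimately show ?thesis by simp
      qed
      also have "\<dots> \<ge> 0" using opF_psd[of u M p] opF_psd[of u P q] by simp
      finally show ?thesis using cpos by (simp add: zero_le_mult_iff)
    qed
    have "(norm (S *v x))^2 \<le> (c * norm x)^2"
      using arg_cong[OF e1, of Re] arg_cong[OF e2, of Re] e3 pos by simp
    then show ?thesis by (rule power2_le_imp_le[OF _ mult_nonneg_nonneg[OF c0 norm_ge_zero]])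
  qed
  have bl: "bounded_linear (\<lambda>x. S *v x)"
  proof (rule bounded_linear_intro)
    show "S *v (x + y) = S *v x + S *v y" for x y by (rule matrix_vector_right_distrib)
    show "S *v (r *\<^sub>R x) = r *\<^sub>R (S *v x)" for r x
    proof -
      have "S *v (r *\<^sub>R x) = S *v (complex_of_real r *s x)" by (simp only: of_real_smult)
      also have "\<dots> = complex_of_real r *s (S *v x)"
        unfolding Sx opF_scale by (simp add: vec_eq_iff algebra_simps)
      finally show ?thesis by (simp only: of_real_smult)
    qed
    show "norm (S *v x) \<le> norm x * c" for x using upper[of x] by (simp add: mult.commute)
  qed
  have le: "spectral_norm S \<le> c"
    unfolding spectral_norm_def by (rule onorm_bound[OF c0 upper])
  have ge: "c \<le> spectral_norm S"
  proof (cases "n = 0")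
    case True
    then show ?thesis using onorm_pos_le[OF bl] by (simp add: c_def spectral_norm_def)
  next
    case False
    have "card P + card M = n" using card_Un_disjoint[OF finP finM PMd] PM by simp
    with False small have "card P < CARD('d) \<or> card M < CARD('d)" by linarith
    then obtain x where x0: "x \<noteq> 0" and Sxe: "S *v x = C *s x \<or> S *v x = - (C *s x)"
    proof
      assume "card P < CARD('d)"
      then obtain x where "x \<noteq> 0" "opF u P x = 0" using kernel_exists[OF finP] by blast
      moreover then have "opF u M x = C *s x" using fr[of x] by simp
      ultimately show ?thesis using that by (simp add: Sx)
    next
      assume "card M < CARD('d)"
      then obtain x where "x \<noteq> 0" "opF u M x = 0" using kernel_exists[OF finM] by blast
      moreover then have "opF u P x = C *s x" using fr[of x] by simp
      ultimately show ?thesis using that by (simp add: Sx)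
    qed
    have "norm (S *v x) = c * norm x"
      using Sxe c0 by (auto simp: C_def of_real_smult)
    then have "c * norm x \<le> spectral_norm S * norm x"
      using onorm[OF bl, of x] by (simp add: spectral_norm_def)
    then show ?thesis using x0 by simp
  qed
  from le ge show ?thesis by (simp add: S_def c_def)
qed

end
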